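(* Let $k\geqslant2$ and let $f$ be a $k$-regular sequence such that $\rho=\rho({\bf B})$ is the unique dominant eigenvalue of ${\bf B}$ and $\rho({\bf B})>\rho^*(\mathcal B)$. Let ${\bf F}:\mathbb R\to\mathbb R^d$ be the solution of the dilation equation $${\bf F}(x)=\sum_{a=0}^{k-1}\rho^{-1}{\bf B}_a{\bf F}(kx-a),\qquad {\bf F}(x)={\bf 0}\ (x\leqslant0),\quad {\bf F}(x)={\bf v}_\rho\ (x\geqslant1).$$ For $j\in\{0,\dots,k-1\}$ define $S_j:\mathbb R^{d+1}\to\mathbb R^{d+1}$ by $$S_j(y_0,{\bf y})=\Big(\tfrac{y_0+j}{k},\ \rho^{-1}{\bf B}_j{\bf y}+\sum_{a=0}^{j-1}\rho^{-1}{\bf B}_a{\bf v}_\rho\Big),\qquad y_0\in\mathbb R,\ {\bf y}\in\mathbb R^d.$$ Then the graph $\mathcal F_f=\{(x,{\bf F}(x)):x\in[0,1]\}$ satisfies $\mathcal F_f=\bigcup_{j=0}^{k-1}S_j(\mathcal F_f)$; that is, $\mathcal F_f$ is the self-affine set (attractor) of the iterated function system $\{S_0,\dots,S_{k-1}\}$.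
   Context: Let $k\geqslant2$. An integer sequence $f=(f(m))_{m\geqslant0}$ is $k$-regular if the $\mathbb Q$-vector space spanned by its $k$-kernel $\{(f(k^\ell n+r))_{n\geqslant0}:\ell\geqslant0,\ 0\leqslant r<k^\ell\}$ is finite-dimensional. Fix a basis $f=f_1,\dots,f_d$ of this space of integer sequences and put ${\bf f}(m)=(f_1(m),\dots,f_d(m))$ (row vector). The digit matrices ${\bf B}_0,\dots,{\bf B}_{k-1}\in\mathbb Z^{d\times d}$ are defined by ${\bf f}(km+a)={\bf f}(m){\bf B}_a$ for all $m\geqslant0$, $0\leqslant a<k$; $\mathcal B=\{{\bf B}_0,\dots,{\bf B}_{k-1}\}$ and ${\bf B}=\sum_a{\bf B}_a$. $\rho({\bf M})$ denotes spectral radius; the joint spectral radius is $\rho^*(\mathcal B)=\limsup_{n\to\infty}\max_{i_0,\dots,i_{n-1}}\|{\bf B}_{i_0}\cdots{\bf B}_{i_{n-1}}\|^{1/n}$ (operator norm). "$\rho({\bf B})$ is the unique dominant eigenvalue" means $\rho=\rho({\bf B})$ is a simple eigenvalue of ${\bf B}$ and every other eigenvalue has modulus $<\rho$; ${\bf v}_\rho$ is a fixed column eigenvector with ${\bf B}{\bf v}_\rho=\rho{\bf v}_\rho$. Under $\rho>\rho^*(\mathcal B)$ the dilation equation above has a unique (continuous) solution ${\bf F}$. A self-affine set is the attractor (unique nonempty compact $K$ with $K=\bigcup_iS_i(K)$) of finitely many ($\geqslant2$) affine contractions. *)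

theory Defs
  imports "HOL-Analysis.Analysis" "HOL-Computational_Algebra.Polynomial"
    "HOL-Library.Liminf_Limsup"
begin

definition k_kernel :: "nat \<Rightarrow> (nat \<Rightarrow> int) \<Rightarrow> (nat \<Rightarrow> rat) set" where
  "k_kernel k f = {(\<lambda>n. rat_of_int (f (k ^ l * n + r))) | l r. r < k ^ l}"

definition rat_span :: "(nat \<Rightarrow> rat) set \<Rightarrow> (nat \<Rightarrow> rat) set" where
  "rat_span A = {g. \<exists>S c. finite S \<and> S \<subseteq> A \<and> g = (\<lambda>n. \<Sum>h\<in>S. c h * h n)}"

text \<open>k-regular: the Q-span of the k-kernel is finite-dimensional, i.e. contained in the span
  of finitely many sequences.\<close>
definition k_regular :: "nat \<Rightarrow> (nat \<Rightarrow> int) \<Rightarrow> bool" where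
  "k_regular k f \<longleftrightarrow> (\<exists>G. finite G \<and> k_kernel k f \<subseteq> rat_span G)"

definition rat_seq :: "(nat \<Rightarrow> int) \<Rightarrow> nat \<Rightarrow> rat" where
  "rat_seq g = (\<lambda>n. rat_of_int (g n))"

definition kernel_basis :: "nat \<Rightarrow> (nat \<Rightarrow> int) \<Rightarrow> ('d::finite \<Rightarrow> nat \<Rightarrow> int) \<Rightarrow> bool" where
  "kernel_basis k f fs \<longleftrightarrow>
     (\<forall>i. rat_seq (fs i) \<in> rat_span (k_kernel k f)) \<and>
     (\<forall>g\<in>k_kernel k f. g \<in> rat_span (range (\<lambda>i. rat_seq (fs i)))) \<and>
     (\<forall>c :: 'd \<Rightarrow> rat. (\<forall>n. (\<Sum>i\<in>UNIV. c i * rat_of_int (fs i n)) = 0) \<longrightarrow> (\<forall>i. c i = 0))"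

definition fvec :: "('d::finite \<Rightarrow> nat \<Rightarrow> int) \<Rightarrow> nat \<Rightarrow> int ^ 'd" where
  "fvec fs m = (\<chi> i. fs i m)"

definition real_mat :: "int ^ 'n ^ 'm \<Rightarrow> real ^ 'n ^ 'm" where
  "real_mat M = (\<chi> i j. real_of_int (M $ i $ j))"

definition charpoly :: "real ^ 'n ^ 'n \<Rightarrow> real poly" where
  "charpoly M = det (\<chi> i j. (if i = j then [:- (M $ i $ j), 1:] else [:- (M $ i $ j):]))"

definition complex_charpoly :: "real ^ 'n ^ 'n \<Rightarrow> complex poly" where
  "complex_charpoly M = map_poly complex_of_real (charpoly M)"

definition spec_rad :: "real ^ 'n ^ 'n \<Rightarrow> real" where
  "spec_rad M = Max (norm ` {z. poly (complex_charpoly M) z = 0})"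

definition unique_dominant_eigenvalue :: "real ^ 'n ^ 'n \<Rightarrow> real \<Rightarrow> bool" where
  "unique_dominant_eigenvalue M \<rho> \<longleftrightarrow>
     order (complex_of_real \<rho>) (complex_charpoly M) = 1 \<and>
     (\<forall>z. poly (complex_charpoly M) z = 0 \<and> z \<noteq> complex_of_real \<rho> \<longrightarrow> norm z < \<rho>)"

definition word_prod :: "(nat \<Rightarrow> real ^ 'n ^ 'n) \<Rightarrow> nat list \<Rightarrow> real ^ 'n ^ 'n" where
  "word_prod Bs w = foldr (\<lambda>a P. Bs a ** P) w (mat 1)"

definition jsr :: "nat \<Rightarrow> (nat \<Rightarrow> real ^ 'n ^ 'n) \<Rightarrow> ereal" where
  "jsr k Bs = limsup (\<lambda>n. ereal (Max ((\<lambda>w. onorm (\<lambda>x. word_prod Bs w *v x) powr (1 / real n))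
        ` {w. length w = n \<and> set w \<subseteq> {..<k}})))"

definition Smap :: "nat \<Rightarrow> (nat \<Rightarrow> real ^ 'n ^ 'n) \<Rightarrow> real \<Rightarrow> real ^ 'n \<Rightarrow> nat
    \<Rightarrow> real \<times> (real ^ 'n) \<Rightarrow> real \<times> (real ^ 'n)" where
  "Smap k Bs \<rho> v j = (\<lambda>(y0, y). ((y0 + real j) / real k,
      (1 / \<rho>) *\<^sub>R (Bs j *v y) + (\<Sum>a<j. (1 / \<rho>) *\<^sub>R (Bs a *v v))))"

end

theory Submission
  imports Defs "HOL-Library.Liminf_Limsup"
begin


definition Sw :: "(nat \<Rightarrow> 'a \<Rightarrow> 'a) \<Rightarrow> nat list \<Rightarrow> 'a \<Rightarrow> 'a" where
  "Sw T w = foldr (\<lambda>j g. T j \<circ> g) w id"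

lemma Sw_Nil[simp]: "Sw T [] = id" by (simp add: Sw_def)
lemma Sw_Cons[simp]: "Sw T (j # w) = T j \<circ> Sw T w" by (simp add: Sw_def)
lemma Sw_snoc: "Sw T (w @ [j]) = Sw T w \<circ> T j"
  by (induction w) auto

lemma chain_pre:
  assumes "A \<subseteq> (\<Union>j<k. T j ` A)" "p \<in> A"
  shows "\<exists>w q. length w = n \<and> set w \<subseteq> {..<k} \<and> q \<in> A \<and> p = Sw T w q"
proof (induction n)
  case 0
  then show ?case using assms(2) by (intro exI[of _ "[]"] exI[of _ p]) auto
next
  case (Suc n)
  then obtain w q where w: "length w = n" "set w \<subseteq> {..<k}" "q \<in> A" "p = Sw T w q" by blast
  then obtain j q' where j: "j < k" "q' \<in> A" "q = T j q'" using assms(1) by blast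
  show ?case using w j by (intro exI[of _ "w @ [j]"] exI[of _ q']) (auto simp: Sw_snoc)
qed

lemma Sw_inv:
  assumes "\<forall>j<k. T j ` B \<subseteq> B" "set w \<subseteq> {..<k}"
  shows "Sw T w ` B \<subseteq> B"
  using assms(2)
proof (induction w)
  case Nil then show ?case by simp
next
  case (Cons j w)
  then have "Sw T w ` B \<subseteq> B" "j < k" by auto
  then show ?case using assms(1) by (auto simp: image_subset_iff)
qed

lemma subset_lemma:
  fixes T :: "nat \<Rightarrow> 'a::metric_space \<Rightarrow> 'a"
  assumes A: "A \<subseteq> (\<Union>j<k. T j ` A)" and B: "\<forall>j<k. T j ` B \<subseteq> B" and cl: "closed B"
    and ne: "B \<noteq> {}" and bd: "bounded (A \<union> B)"
    and lip: "\<forall>e>0. \<exists>n. \<forall>w. length w = n \<and> set w \<subseteq> {..<k} \<longrightarrow>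
               (\<forall>p q. dist (Sw T w p) (Sw T w q) \<le> e * dist p q)"
  shows "A \<subseteq> B"
proof
  fix p assume p: "p \<in> A"
  obtain b0 where b0: "b0 \<in> B" using ne by blast
  obtain D where D: "\<forall>x\<in>A \<union> B. \<forall>y\<in>A \<union> B. dist x y \<le> D"
    using bd unfolding bounded_two_points by blast
  have D0: "0 \<le> D" using D b0 by (metis UnI2 dist_self)
  have "\<forall>e>0. \<exists>y\<in>B. dist y p < e"
  proof (intro allI impI)
    fix e :: real assume e: "e > 0"
    then have "e / (D + 1) > 0" using D0 by simp
    then obtain n where n: "\<forall>w. length w = n \<and> set w \<subseteq> {..<k} \<longrightarrow>
               (\<forall>p q. dist (Sw T w p) (Sw T w q) \<le> e / (D + 1) * dist p q)"
      using lip by blast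
    obtain w q where w: "length w = n" "set w \<subseteq> {..<k}" "q \<in> A" "p = Sw T w q"
      using chain_pre[OF A p] by blast
    have y: "Sw T w b0 \<in> B" using Sw_inv[OF B w(2)] b0 by blast
    have "dist (Sw T w b0) p = dist (Sw T w q) (Sw T w b0)" using w(4) by (simp add: dist_commute)
    also have "\<dots> \<le> e / (D + 1) * dist q b0" using n w by blast
    also have "\<dots> \<le> e / (D + 1) * D"
      using D w(3) b0 \<open>e / (D + 1) > 0\<close> by (intro mult_left_mono) auto
    also have "\<dots> < e" using e D0 by (simp add: field_simps)
    finally show "\<exists>y\<in>B. dist y p < e" using y by blast
  qed
  then show "p \<in> B" using closed_approachable[OF cl] by blast
qed



lemma Smap_diff:
  "fst (Smap k M \<rho> v j p) - fst (Smap k M \<rho> v j q) = (fst p - fst q) / real k \<and>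
   snd (Smap k M \<rho> v j p) - snd (Smap k M \<rho> v j q) = (1/\<rho>) *\<^sub>R (M j *v (snd p - snd q))"
  by (cases p; cases q) (simp add: Smap_def diff_divide_distrib add_divide_distrib matrix_vector_mult_diff_distrib
      scaleR_diff_right)

lemma Sw_diff:
  "fst (Sw (Smap k M \<rho> v) w p) - fst (Sw (Smap k M \<rho> v) w q) = (fst p - fst q) / real k ^ length w \<and>
   snd (Sw (Smap k M \<rho> v) w p) - snd (Sw (Smap k M \<rho> v) w q)
     = (1/\<rho>) ^ length w *\<^sub>R (word_prod M w *v (snd p - snd q))"
proof (induction w)
  case Nil then show ?case by (simp add: word_prod_def)
next
  case (Cons j w)
  have e: "fst (Sw (Smap k M \<rho> v) (j#w) p) - fst (Sw (Smap k M \<rho> v) (j#w) q) =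
     (fst (Sw (Smap k M \<rho> v) w p) - fst (Sw (Smap k M \<rho> v) w q)) / real k"
     "snd (Sw (Smap k M \<rho> v) (j#w) p) - snd (Sw (Smap k M \<rho> v) (j#w) q) =
     (1/\<rho>) *\<^sub>R (M j *v (snd (Sw (Smap k M \<rho> v) w p) - snd (Sw (Smap k M \<rho> v) w q)))"
    using Smap_diff[of k M \<rho> v j "Sw (Smap k M \<rho> v) w p" "Sw (Smap k M \<rho> v) w q"] by simp_all
  have w: "word_prod M (j#w) = M j ** word_prod M w" by (simp add: word_prod_def)
  show ?case unfolding e w using Cons
    by (simp add: matrix_vector_mult_scaleR matrix_vector_mul_assoc)
qed

lemma dist_fst_snd:
  fixes p q :: "real \<times> ('b::real_normed_vector)"
  shows "dist (fst p) (fst q) \<le> dist p q" "dist (snd p) (snd q) \<le> dist p q"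
  by (metis dist_norm fst_diff norm_fst_le surjective_pairing)
     (metis dist_norm snd_diff norm_snd_le surjective_pairing)

lemma Sw_lip:
  assumes "\<rho> > 0" "k > 0"
  shows "dist (Sw (Smap k M \<rho> v) w p) (Sw (Smap k M \<rho> v) w q)
     \<le> (1 / real k ^ length w + (1/\<rho>) ^ length w * onorm (\<lambda>x. word_prod M w *v x)) * dist p q"
proof -
  let ?S = "Sw (Smap k M \<rho> v) w"
  let ?n = "length w"
  let ?o = "onorm (\<lambda>x. word_prod M w *v x)"
  have d1: "dist (fst p) (fst q) \<le> dist p q" "dist (snd p) (snd q) \<le> dist p q"
    by (rule dist_fst_snd)+
  have o0: "0 \<le> ?o" by (rule onorm_pos_le[OF matrix_vector_mul_bounded_linear])
  have "dist (?S p) (?S q) = norm (?S p - ?S q)" by (simp add: dist_norm)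
  also have "\<dots> \<le> norm (fst (?S p) - fst (?S q)) + norm (snd (?S p) - snd (?S q))"
    by (metis fst_diff snd_diff norm_Pair_le surjective_pairing)
  also have "norm (fst (?S p) - fst (?S q)) = dist (fst p) (fst q) / real k ^ ?n"
    using Sw_diff[of k M \<rho> v w p q] by (simp add: dist_real_def)
  also have "norm (snd (?S p) - snd (?S q)) = (1/\<rho>) ^ ?n * norm (word_prod M w *v (snd p - snd q))"
    using Sw_diff[of k M \<rho> v w p q] assms by simp
  also have "\<dots> \<le> (1/\<rho>) ^ ?n * (?o * dist (snd p) (snd q))"
    using onorm[OF matrix_vector_mul_bounded_linear, of "word_prod M w" "snd p - snd q"] assms
    by (intro mult_left_mono) (auto simp: dist_norm)
  also have "dist (fst p) (fst q) / real k ^ ?n + (1/\<rho>) ^ ?n * (?o * dist (snd p) (snd q))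
      \<le> dist p q / real k ^ ?n + (1/\<rho>) ^ ?n * (?o * dist p q)"
    using d1 assms o0
    by (intro add_mono divide_right_mono mult_left_mono) auto
  also have "\<dots> = (1 / real k ^ ?n + (1/\<rho>) ^ ?n * ?o) * dist p q"
    by (simp add: algebra_simps)
  finally show ?thesis by simp
qed

lemma powr_root_pow:
  fixes x :: real assumes "x \<ge> 0" "n > 0"
  shows "(x powr (1 / real n)) ^ n = x"
proof (cases "x = 0")
  case True then show ?thesis using assms by simp
next
  case False
  then have "(x powr (1 / real n)) ^ n = (x powr (1 / real n)) powr real n"
    using assms by (simp add: powr_realpow)
  also have "\<dots> = x" using assms by (simp add: powr_powr)
  finally show ?thesis .
qed

lemma jsr_contract:
  fixes M :: "nat \<Rightarrow> real ^ 'n ^ 'n"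
  assumes k2: "k \<ge> 2" and j: "ereal \<rho> > jsr k M"
  shows "\<rho> > 0 \<and> (\<forall>e>0. \<exists>n. \<forall>w. length w = n \<and> set w \<subseteq> {..<k} \<longrightarrow>
     (\<forall>p q. dist (Sw (Smap k M \<rho> v) w p) (Sw (Smap k M \<rho> v) w q) \<le> e * dist p q))"
proof -
  define W where "W n = {w. length w = n \<and> set w \<subseteq> {..<k}}" for n
  define Y where "Y n = Max ((\<lambda>w. onorm (\<lambda>x. word_prod M w *v x) powr (1 / real n)) ` W n)" for n
  have finW: "finite (W n)" for n
  proof -
    have "W n = {xs. set xs \<subseteq> {..<k} \<and> length xs = n}" by (auto simp: W_def)
    then show ?thesis by (simp add: finite_lists_length_eq)
  qed
  have repW: "replicate n 0 \<in> W n" for n using k2 by (auto simp: W_def)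
  have Yge: "onorm (\<lambda>x. word_prod M w *v x) powr (1 / real n) \<le> Y n" if "w \<in> W n" for w n
    unfolding Y_def using finW that by (intro Max_ge) auto
  have Y0: "0 \<le> Y n" for n using Yge[OF repW, of n] by (meson order_trans powr_ge_zero)
  have jdef: "jsr k M = limsup (\<lambda>n. ereal (Y n))" unfolding jsr_def Y_def W_def by simp
  have "0 \<le> jsr k M" unfolding jdef
    by (rule le_Limsup) (auto simp: Y0)
  from ereal_dense2[OF j] obtain r where r: "jsr k M < ereal r" "ereal r < ereal \<rho>" by blast
  have r0: "r > 0" using r(1) \<open>0 \<le> jsr k M\<close> by (metis ereal_less(2) order_le_less_trans)
  have rr: "r < \<rho>" using r(2) by simp
  have \<rho>0: "\<rho> > 0" using r0 rr by simp
  have "eventually (\<lambda>n. ereal (Y n) < ereal r) sequentially"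
    using Limsup_lessD r(1) unfolding jdef by blast
  then obtain N where N: "\<And>n. n \<ge> N \<Longrightarrow> Y n < r" by (auto simp: eventually_sequentially)
  have onb: "onorm (\<lambda>x. word_prod M w *v x) \<le> r ^ n" if "n \<ge> N" "n > 0" "w \<in> W n" for n w
  proof -
    let ?o = "onorm (\<lambda>x. word_prod M w *v x)"
    have o0: "0 \<le> ?o" by (rule onorm_pos_le[OF matrix_vector_mul_bounded_linear])
    have "?o powr (1 / real n) \<le> r" using Yge[OF that(3)] N[OF that(1)] by simp
    then have "(?o powr (1 / real n)) ^ n \<le> r ^ n" by (intro power_mono) auto
    then show ?thesis using powr_root_pow[OF o0 that(2)] by simp
  qed
  have lk: "(\<lambda>n. (1 / real k) ^ n) \<longlonglongrightarrow> 0" using k2 by (intro LIMSEQ_power_zero) auto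
  have lr: "(\<lambda>n. (r / \<rho>) ^ n) \<longlonglongrightarrow> 0" using r0 rr by (intro LIMSEQ_power_zero) auto
  have "\<forall>e>0. \<exists>n. \<forall>w. length w = n \<and> set w \<subseteq> {..<k} \<longrightarrow>
     (\<forall>p q. dist (Sw (Smap k M \<rho> v) w p) (Sw (Smap k M \<rho> v) w q) \<le> e * dist p q)"
  proof (intro allI impI)
    fix e :: real assume e: "e > 0"
    have "eventually (\<lambda>n. (1 / real k) ^ n < e / 2) sequentially"
      using order_tendstoD(2)[OF lk, of "e/2"] e by simp
    moreover have "eventually (\<lambda>n. (r / \<rho>) ^ n < e / 2) sequentially"
      using order_tendstoD(2)[OF lr, of "e/2"] e by simp
    moreover have "eventually (\<lambda>n. n \<ge> max N 1) sequentially" by (rule eventually_ge_at_top)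
    ultimately have "eventually (\<lambda>n. (1 / real k) ^ n < e / 2 \<and> (r / \<rho>) ^ n < e / 2 \<and> n \<ge> max N 1)
       sequentially" by eventually_elim auto
    then obtain n where n: "(1 / real k) ^ n < e / 2" "(r / \<rho>) ^ n < e / 2" "n \<ge> N" "n > 0"
      by (auto simp: eventually_sequentially)
    show "\<exists>n. \<forall>w. length w = n \<and> set w \<subseteq> {..<k} \<longrightarrow>
     (\<forall>p q. dist (Sw (Smap k M \<rho> v) w p) (Sw (Smap k M \<rho> v) w q) \<le> e * dist p q)"
    proof (intro exI[of _ n] allI impI)
      fix w p q assume w: "length w = n \<and> set w \<subseteq> {..<k}"
      then have wW: "w \<in> W n" by (simp add: W_def)
      let ?o = "onorm (\<lambda>x. word_prod M w *v x)"
      have "(1/\<rho>) ^ n * ?o \<le> (1/\<rho>) ^ n * r ^ n"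
        using onb[OF n(3) n(4) wW] \<rho>0 by (intro mult_left_mono) auto
      also have "\<dots> = (r / \<rho>) ^ n" by (simp add: power_divide)
      finally have a: "(1/\<rho>) ^ n * ?o \<le> e / 2" using n(2) by simp
      have b: "1 / real k ^ n \<le> e / 2" using n(1) by (simp add: power_one_over)
      have "dist (Sw (Smap k M \<rho> v) w p) (Sw (Smap k M \<rho> v) w q)
         \<le> (1 / real k ^ length w + (1/\<rho>) ^ length w * ?o) * dist p q"
        using Sw_lip[of \<rho> k M v w p q] \<rho>0 k2 by simp
      also have "\<dots> \<le> e * dist p q"
        using a b w by (intro mult_right_mono) auto
      finally show "dist (Sw (Smap k M \<rho> v) w p) (Sw (Smap k M \<rho> v) w q) \<le> e * dist p q" .
    qed
  qed
  then show ?thesis using \<rho>0 by blast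
qed



theorem theorem2:
  fixes k :: nat and f :: "nat \<Rightarrow> int" and fs :: "'d::finite \<Rightarrow> nat \<Rightarrow> int" and i0 :: 'd
    and B :: "nat \<Rightarrow> int ^ 'd ^ 'd" and \<rho> :: real and v :: "real ^ 'd"
    and F :: "real \<Rightarrow> real ^ 'd"
  assumes k2: "k \<ge> 2"
    and reg: "k_regular k f"
    and basis: "kernel_basis k f fs" and first: "fs i0 = f"
    and digit: "\<forall>m a. a < k \<longrightarrow> fvec fs (k * m + a) = fvec fs m v* B a"
    and rho: "\<rho> = spec_rad (real_mat (\<Sum>a<k. B a))"
    and dom: "unique_dominant_eigenvalue (real_mat (\<Sum>a<k. B a)) \<rho>"
    and jsr: "ereal \<rho> > jsr k (\<lambda>a. real_mat (B a))"
    and eigv: "v \<noteq> 0" "real_mat (\<Sum>a<k. B a) *v v = \<rho> *\<^sub>R v"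
    and Fcont: "continuous_on UNIV F"
    and dil: "\<forall>x. F x = (\<Sum>a<k. (1 / \<rho>) *\<^sub>R (real_mat (B a) *v F (real k * x - real a)))"
    and F0: "\<forall>x \<le> 0. F x = 0" and F1: "\<forall>x \<ge> 1. F x = v"
  defines "G \<equiv> {(x, F x) | x. x \<in> {0..1}}"
  shows "G = (\<Union>j<k. Smap k (\<lambda>a. real_mat (B a)) \<rho> v j ` G)
         \<and> compact G \<and> G \<noteq> {}
         \<and> (\<forall>K. compact K \<and> K \<noteq> {} \<and> K = (\<Union>j<k. Smap k (\<lambda>a. real_mat (B a)) \<rho> v j ` K)
               \<longrightarrow> K = G)"
proof -
  let ?M = "\<lambda>a. real_mat (B a)"
  let ?T = "Smap k ?M \<rho> v"
  have k0: "real k > 0" using k2 by simp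
  have \<rho>0: "\<rho> > 0" and lip: "\<forall>e>0. \<exists>n. \<forall>w. length w = n \<and> set w \<subseteq> {..<k} \<longrightarrow>
     (\<forall>p q. dist (Sw ?T w p) (Sw ?T w q) \<le> e * dist p q)"
    using jsr_contract[OF k2 jsr, where v=v] by blast+
  have Gim: "G = (\<lambda>x. (x, F x)) ` {0..1}" unfolding G_def by auto
  have step: "?T j (x, F x) = ((x + real j) / real k, F ((x + real j) / real k))"
    if x: "x \<in> {0..1}" and j: "j < k" for x j
  proof -
    let ?y = "(x + real j) / real k"
    let ?g = "\<lambda>a. (1 / \<rho>) *\<^sub>R (?M a *v F (real k * ?y - real a))"
    have ky: "real k * ?y = x + real j" using k0 by simp
    have "F ?y = sum ?g {..<k}" by (rule spec[OF dil])
    also have "\<dots> = sum ?g {0..<j} + sum ?g {j..<k}"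
      using j by (simp add: lessThan_atLeast0 sum.atLeastLessThan_concat)
    also have "sum ?g {j..<k} = ?g j + sum ?g {Suc j..<k}"
      using j by (simp add: sum.atLeast_Suc_lessThan)
    also have "sum ?g {Suc j..<k} = 0"
    proof (rule sum.neutral, rule ballI)
      fix a assume "a \<in> {Suc j..<k}"
      then have "real k * ?y - real a \<le> 0" using x unfolding ky by auto
      then show "?g a = 0" using F0 by simp
    qed
    also have "?g j = (1 / \<rho>) *\<^sub>R (?M j *v F x)" unfolding ky by simp
    also have "sum ?g {0..<j} = (\<Sum>a<j. (1 / \<rho>) *\<^sub>R (?M a *v v))"
      unfolding lessThan_atLeast0
    proof (rule sum.cong[OF refl])
      fix a assume "a \<in> {0..<j}"
      then have "real k * ?y - real a \<ge> 1" using x unfolding ky by auto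
      then show "?g a = (1 / \<rho>) *\<^sub>R (?M a *v v)" using F1 by simp
    qed
    finally show ?thesis unfolding Smap_def by simp
  qed
  have inv: "G = (\<Union>j<k. ?T j ` G)"
  proof
    show "(\<Union>j<k. ?T j ` G) \<subseteq> G"
    proof (clarsimp simp: Gim)
      fix j and x :: real assume j: "j < k" and x: "0 \<le> x" "x \<le> 1"
      have "?T j (x, F x) = ((x + real j) / real k, F ((x + real j) / real k))"
        using step[of x j] x j by simp
      moreover have "(x + real j) / real k \<in> {0..1}"
        using x j k0 by (auto simp: field_simps)
      ultimately show "?T j (x, F x) \<in> (\<lambda>x. (x, F x)) ` {0..1}" by auto
    qed
  next
    show "G \<subseteq> (\<Union>j<k. ?T j ` G)"
    proof
      fix p assume "p \<in> G"
      then obtain y where y: "0 \<le> y" "y \<le> 1" and p: "p = (y, F y)" unfolding Gim by auto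
      obtain j x where jx: "j < k" "x \<in> {0..1}" "y = (x + real j) / real k"
      proof (cases "y = 1")
        case True
        show ?thesis
          using that[of "k - 1" 1] True k2 k0 by (auto simp: of_nat_diff)
      next
        case False
        define j where "j = nat \<lfloor>real k * y\<rfloor>"
        have f0: "0 \<le> \<lfloor>real k * y\<rfloor>" using y k0 by simp
        have "real k * y < real k" using y False k0 by simp
        then have "\<lfloor>real k * y\<rfloor> < int k" by (simp add: floor_less_iff)
        then have jk: "j < k" unfolding j_def using f0 by (simp add: nat_less_iff)
        have rj: "real j = of_int \<lfloor>real k * y\<rfloor>" unfolding j_def using f0 by simp
        have "real j \<le> real k * y" "real k * y < real j + 1" unfolding rj
          by (simp add: of_int_floor_le) linarith
        then show ?thesis
          using that[of j "real k * y - real j"] jk k0 by auto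
      qed
      then have "(y, F y) = ?T j (x, F x)" using step[of x j] by simp
      moreover have "(x, F x) \<in> G" using jx unfolding Gim by auto
      ultimately show "p \<in> (\<Union>j<k. ?T j ` G)" using jx(1) p by blast
    qed
  qed
  have cG: "compact G" unfolding Gim
    by (intro compact_continuous_image continuous_on_Pair continuous_on_id
        continuous_on_subset[OF Fcont]) auto
  have neG: "G \<noteq> {}" unfolding Gim by auto
  have Tinv: "\<forall>j<k. ?T j ` G \<subseteq> G" using inv by blast
  have uniq: "K = G" if K: "compact K" "K \<noteq> {}" "K = (\<Union>j<k. ?T j ` K)" for K
  proof
    have bd: "bounded (K \<union> G)" using K cG by (simp add: compact_imp_bounded)
    show "K \<subseteq> G"
      by (rule subset_lemma[where A=K and k=k and T="Smap k (\<lambda>a. real_mat (B a)) \<rho> v" and B=G]) (use K inv bd cG neG compact_imp_closed lip in auto)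
    have bd': "bounded (G \<union> K)" using bd by (simp add: Un_commute)
    have KT: "\<forall>j<k. ?T j ` K \<subseteq> K" using K(3) by blast
    show "G \<subseteq> K"
      by (rule subset_lemma[where A=G and k=k and T="Smap k (\<lambda>a. real_mat (B a)) \<rho> v" and B=K]) (use K inv bd' KT compact_imp_closed[OF K(1)] lip in auto)
  qed
  show ?thesis using inv cG neG uniq by blast
qed

end
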